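(* If $\omega\in\Lambda^s(n,n;r)$ and $\pi\in\Lambda^t(n,n;r)$, then $\xi_\omega\xi_\pi\in J^R_{s+t}(n,r)$.
   Context: $R$ commutative ring with identity, $n,r$ positive integers. $I(n,r)=\{1,\dots,n\}^r$; $\Lambda(n,n;r)$: $n\times n$ matrices of nonnegative integers with total sum $r$. For $i,j\in I(n,r)$, $\operatorname{wt}(i,j)_{st}=\#\{q:i_q=s,j_q=t\}$, $(i,j)\in\omega$ means $\operatorname{wt}(i,j)=\omega$. $S_R(n,r)=\mathrm{End}_{R\Sigma_r}((R^n)^{\otimes r})$ ($\Sigma_r$ permuting tensor positions: $e_i\sigma=e_{i\sigma}$, $(i\sigma)_q=i_{\sigma(q)}$); $\xi_\omega=\sum_{(i,j)\in\omega}e_{i,j}$, where $e_{i,j}e_k=\delta_{jk}e_i$. For $s\ge0$, $\Lambda^s(n,n;r)$ is the set of upper triangular $\omega\in\Lambda(n,n;r)$ with $\sum_{1\le k\le l\le n}(l-k)\omega_{kl}\ge s$, and $J^R_s(n,r)$ is the $R$-submodule of $S_R(n,r)$ spanned by $\{\xi_\omega:\omega\in\Lambda^s(n,n;r)\}$. *)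

theory Defs
  imports Main
begin

definition Iset :: "nat \<Rightarrow> nat \<Rightarrow> nat list set" where
  "Iset n r = {i. length i = r \<and> set i \<subseteq> {1..n}}"

definition wt :: "nat list \<Rightarrow> nat list \<Rightarrow> nat \<Rightarrow> nat \<Rightarrow> nat" where
  "wt i j s t = card {q. q < length i \<and> i ! q = s \<and> j ! q = t}"

definition Lambda :: "nat \<Rightarrow> nat \<Rightarrow> (nat \<Rightarrow> nat \<Rightarrow> nat) set" where
  "Lambda n r = {\<omega>. (\<forall>k l. \<omega> k l \<noteq> 0 \<longrightarrow> k \<in> {1..n} \<and> l \<in> {1..n})
                    \<and> (\<Sum>k=1..n. \<Sum>l=1..n. \<omega> k l) = r}"

definition Lambda_s :: "nat \<Rightarrow> nat \<Rightarrow> nat \<Rightarrow> (nat \<Rightarrow> nat \<Rightarrow> nat) set" where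
  "Lambda_s s n r = {\<omega> \<in> Lambda n r. (\<forall>k l. l < k \<longrightarrow> \<omega> k l = 0)
        \<and> (\<Sum>k=1..n. \<Sum>l=k..n. (l - k) * \<omega> k l) \<ge> s}"

text \<open>Elements of End_R((R^n)^{\<otimes>r}) are represented by their matrices w.r.t. the
  basis e_i (i in I(n,r)); entries outside I(n,r) x I(n,r) are zero.
  xi_omega = sum_{(i,j) in omega} e_{i,j}.\<close>
definition xi :: "nat \<Rightarrow> nat \<Rightarrow> (nat \<Rightarrow> nat \<Rightarrow> nat) \<Rightarrow> nat list \<Rightarrow> nat list \<Rightarrow> 'a::comm_ring_1" where
  "xi n r \<omega> i j = (if i \<in> Iset n r \<and> j \<in> Iset n r \<and> wt i j = \<omega> then 1 else 0)"

text \<open>Product (composition) of endomorphisms: e_{i,j} e_{k,l} = delta_{jk} e_{i,l}.\<close>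
definition emult :: "nat \<Rightarrow> nat \<Rightarrow> (nat list \<Rightarrow> nat list \<Rightarrow> 'a::comm_ring_1)
     \<Rightarrow> (nat list \<Rightarrow> nat list \<Rightarrow> 'a) \<Rightarrow> nat list \<Rightarrow> nat list \<Rightarrow> 'a" where
  "emult n r A B = (\<lambda>i l. \<Sum>j\<in>Iset n r. A i j * B j l)"

definition J :: "nat \<Rightarrow> nat \<Rightarrow> nat \<Rightarrow> (nat list \<Rightarrow> nat list \<Rightarrow> 'a::comm_ring_1) set" where
  "J s n r = {M. \<exists>c :: (nat \<Rightarrow> nat \<Rightarrow> nat) \<Rightarrow> 'a.
      M = (\<lambda>i j. \<Sum>\<omega>\<in>Lambda_s s n r. c \<omega> * xi n r \<omega> i j)}"

end

theory Submission
  imports Defs "HOL-Combinatorics.List_Permutation" "HOL-Library.FuncSet"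
begin

lemma wt_perm:
  assumes f: "bij_betw f {..<r} {..<r}" and la: "length a = r" and lb: "length b = r"
  shows "wt (map (\<lambda>q. a ! f q) [0..<r]) (map (\<lambda>q. b ! f q) [0..<r]) = wt a b"
proof (intro ext)
  fix s t
  let ?A = "{q. q < r \<and> a ! f q = s \<and> b ! f q = t}"
  have e1: "{q. q < length (map (\<lambda>q. a ! f q) [0..<r]) \<and> map (\<lambda>q. a ! f q) [0..<r] ! q = s
        \<and> map (\<lambda>q. b ! f q) [0..<r] ! q = t} = ?A" by auto
  have inj: "inj_on f ?A" using f unfolding bij_betw_def by (auto intro: inj_on_subset)
  have img: "f ` ?A = {p. p < length a \<and> a ! p = s \<and> b ! p = t}"
  proof
    show "f ` ?A \<subseteq> {p. p < length a \<and> a ! p = s \<and> b ! p = t}"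
      using f la unfolding bij_betw_def by auto
    show "{p. p < length a \<and> a ! p = s \<and> b ! p = t} \<subseteq> f ` ?A"
    proof
      fix p assume p: "p \<in> {p. p < length a \<and> a ! p = s \<and> b ! p = t}"
      then have "p \<in> f ` {..<r}" using f la unfolding bij_betw_def by auto
      then obtain q where "q < r" "p = f q" by auto
      then show "p \<in> f ` ?A" using p by auto
    qed
  qed
  show "wt (map (\<lambda>q. a ! f q) [0..<r]) (map (\<lambda>q. b ! f q) [0..<r]) s t = wt a b s t"
    unfolding wt_def e1 using card_image[OF inj] img by simp
qed

lemma finite_Iset: "finite (Iset n r)"
proof -
  have "Iset n r \<subseteq> {xs. set xs \<subseteq> {1..n} \<and> length xs = r}" unfolding Iset_def by auto
  then show ?thesis using finite_lists_length_eq[of "{1..n}" r] finite_subset by blast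
qed

lemma wt_sum:
  assumes "i \<in> Iset n r" "l \<in> Iset n r"
  shows "(\<Sum>k=1..n. \<Sum>m=1..n. g k m * wt i l k m) = (\<Sum>q<r. g (i ! q) (l ! q))"
proof -
  have li: "length i = r" and si: "set i \<subseteq> {1..n}" and ll: "length l = r" and sl: "set l \<subseteq> {1..n}"
    using assms unfolding Iset_def by auto
  have w: "wt i l k m = (\<Sum>q<r. if i ! q = k \<and> l ! q = m then 1 else 0)" for k m
    unfolding wt_def li by (simp add: sum.If_cases Int_def lessThan_def conj_commute)
  have "(\<Sum>k=1..n. \<Sum>m=1..n. g k m * wt i l k m)
      = (\<Sum>k=1..n. \<Sum>m=1..n. \<Sum>q<r. if i ! q = k \<and> l ! q = m then g k m else 0)"
    unfolding w by (simp add: sum_distrib_left if_distrib cong: if_cong)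
  also have "\<dots> = (\<Sum>q<r. \<Sum>k=1..n. \<Sum>m=1..n. if i ! q = k \<and> l ! q = m then g k m else 0)"
    by (simp add: sum.swap[of _ "{1..n}"] sum.swap[of _ "{..<r}"])
  also have "\<dots> = (\<Sum>q<r. g (i ! q) (l ! q))"
  proof (rule sum.cong[OF refl])
    fix q assume "q \<in> {..<r}"
    then have "i ! q \<in> set i" "l ! q \<in> set l" using li ll by auto
    then have "i ! q \<in> {1..n}" "l ! q \<in> {1..n}" using si sl by blast+
    then show "(\<Sum>k=1..n. \<Sum>m=1..n. if i ! q = k \<and> l ! q = m then g k m else 0) = g (i ! q) (l ! q)"
    proof -
      have "(\<Sum>m=1..n. if i ! q = k \<and> l ! q = m then g k m else 0)
           = (if i ! q = k then g k (l ! q) else 0)" for k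
        using \<open>l ! q \<in> {1..n}\<close> by (simp add: sum.delta)
      then show ?thesis using \<open>i ! q \<in> {1..n}\<close> by (simp add: sum.delta)
    qed
  qed
  finally show ?thesis .
qed

lemma finite_Lambda_s: "finite (Lambda_s s n r)"
proof -
  let ?F = "\<lambda>g k l. if k \<in> {1..n} \<and> l \<in> {1..n} then g (k, l) else (0::nat)"
  have "Lambda n r \<subseteq> ?F ` PiE ({1..n}\<times>{1..n}) (\<lambda>_. {0..r})"
  proof
    fix \<omega> assume w: "\<omega> \<in> Lambda n r"
    let ?g = "restrict (\<lambda>(k,l). \<omega> k l) ({1..n}\<times>{1..n})"
    have le: "\<omega> k l \<le> r" if "k \<in> {1..n}" "l \<in> {1..n}" for k l
    proof -
      have "\<omega> k l \<le> (\<Sum>l'=1..n. \<omega> k l')" using that by (intro member_le_sum) auto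
      also have "\<dots> \<le> (\<Sum>k'=1..n. \<Sum>l'=1..n. \<omega> k' l')"
        using that by (intro member_le_sum[where f="\<lambda>k'. \<Sum>l'=1..n. \<omega> k' l'"]) auto
      finally show ?thesis using w unfolding Lambda_def by simp
    qed
    have "?g \<in> PiE ({1..n}\<times>{1..n}) (\<lambda>_. {0..r})" using le by auto
    moreover have "\<omega> = ?F ?g"
    proof (intro ext)
      fix k l
      have "\<omega> k l \<noteq> 0 \<longrightarrow> k \<in> {1..n} \<and> l \<in> {1..n}" using w unfolding Lambda_def by blast
      then show "\<omega> k l = ?F ?g k l" by (cases "k \<in> {1..n} \<and> l \<in> {1..n}") auto
    qed
    ultimately show "\<omega> \<in> ?F ` PiE ({1..n}\<times>{1..n}) (\<lambda>_. {0..r})" by blast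
  qed
  then have "finite (Lambda n r)" by (rule finite_subset) (intro finite_imageI finite_PiE; simp)
  then show ?thesis unfolding Lambda_s_def by simp
qed

lemma deg_eq:
  fixes \<theta> :: "nat \<Rightarrow> nat \<Rightarrow> nat"
  shows "(\<Sum>k=1..n. \<Sum>m=k..n. (m - k) * \<theta> k m) = (\<Sum>k=1..n. \<Sum>m=1..n. (m - k) * \<theta> k m)"
proof (rule sum.cong[OF refl])
  fix k assume k: "k \<in> {1..n}"
  show "(\<Sum>m=k..n. (m - k) * \<theta> k m) = (\<Sum>m=1..n. (m - k) * \<theta> k m)"
  proof (rule sum.mono_neutral_left)
    show "{k..n} \<subseteq> {1..n}" using k by auto
  qed auto
qed

lemma wt_pos:
  assumes "q < length i"
  shows "wt i j (i ! q) (j ! q) \<noteq> 0"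
proof -
  have "finite {q'. q' < length i \<and> i ! q' = i ! q \<and> j ! q' = j ! q}" by simp
  moreover have "q \<in> {q'. q' < length i \<and> i ! q' = i ! q \<and> j ! q' = j ! q}" using assms by simp
  ultimately show ?thesis unfolding wt_def by (metis card_0_eq empty_iff)
qed

lemma comp_deg:
  assumes I: "i \<in> Iset n r" "j \<in> Iset n r" "l \<in> Iset n r"
    and w1: "wt i j \<in> Lambda_s s n r" and w2: "wt j l \<in> Lambda_s t n r"
  shows "wt i l \<in> Lambda_s (s + t) n r"
proof -
  have li: "length i = r" and si: "set i \<subseteq> {1..n}" and ll: "length l = r" and sl: "set l \<subseteq> {1..n}"
    and lj: "length j = r"
    using I unfolding Iset_def by auto
  have le1: "i ! q \<le> j ! q" if "q < r" for q
  proof (rule ccontr)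
    assume "\<not> i ! q \<le> j ! q"
    then have "wt i j (i ! q) (j ! q) = 0" using w1 unfolding Lambda_s_def by auto
    then show False using wt_pos[of q i j] that li by simp
  qed
  have le2: "j ! q \<le> l ! q" if "q < r" for q
  proof (rule ccontr)
    assume "\<not> j ! q \<le> l ! q"
    then have "wt j l (j ! q) (l ! q) = 0" using w2 unfolding Lambda_s_def by auto
    then show False using wt_pos[of q j l] that lj by simp
  qed
  have supp: "wt i l k m \<noteq> 0 \<longrightarrow> k \<in> {1..n} \<and> m \<in> {1..n}" for k m
  proof
    assume "wt i l k m \<noteq> 0"
    then obtain q where q: "q < length i" "i ! q = k" "l ! q = m"
      unfolding wt_def by (metis (mono_tags, lifting) card.empty empty_Collect_eq)
    then have "i ! q \<in> set i" "l ! q \<in> set l" using li ll by auto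
    then show "k \<in> {1..n} \<and> m \<in> {1..n}" using q si sl by blast
  qed
  have tot: "(\<Sum>k=1..n. \<Sum>m=1..n. wt i l k m) = r"
    using wt_sum[OF I(1) I(3), of "\<lambda>_ _. 1"] by simp
  have ut: "wt i l k m = 0" if "m < k" for k m
  proof -
    have "{q. q < length i \<and> i ! q = k \<and> l ! q = m} = {}"
      using le1 le2 that li by (auto, fastforce)
    then show ?thesis unfolding wt_def by simp
  qed
  have deg: "(\<Sum>k=1..n. \<Sum>m=k..n. (m - k) * wt a b k m) = (\<Sum>q<r. b ! q - a ! q)"
    if "a \<in> Iset n r" "b \<in> Iset n r" for a b
    unfolding deg_eq using wt_sum[OF that, of "\<lambda>k m. m - k"] by simp
  have "(\<Sum>q<r. l ! q - i ! q) = (\<Sum>q<r. (j ! q - i ! q) + (l ! q - j ! q))"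
    by (rule sum.cong[OF refl]) (use le1 le2 in fastforce)
  also have "\<dots> = (\<Sum>q<r. j ! q - i ! q) + (\<Sum>q<r. l ! q - j ! q)" by (rule sum.distrib)
  finally have "(\<Sum>k=1..n. \<Sum>m=k..n. (m - k) * wt i l k m)
     = (\<Sum>k=1..n. \<Sum>m=k..n. (m - k) * wt i j k m) + (\<Sum>k=1..n. \<Sum>m=k..n. (m - k) * wt j l k m)"
    using deg I by simp
  moreover have "(\<Sum>k=1..n. \<Sum>m=k..n. (m - k) * wt i j k m) \<ge> s"
    "(\<Sum>k=1..n. \<Sum>m=k..n. (m - k) * wt j l k m) \<ge> t"
    using w1 w2 unfolding Lambda_s_def by auto
  ultimately show ?thesis unfolding Lambda_s_def Lambda_def using supp tot ut by auto
qed


lemma emult_inv: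
  assumes I: "i \<in> Iset n r" "l \<in> Iset n r" "i' \<in> Iset n r" "l' \<in> Iset n r"
    and W: "wt i l = wt i' l'"
  shows "emult n r (xi n r \<omega>) (xi n r \<pi> :: nat list \<Rightarrow> nat list \<Rightarrow> 'a::comm_ring_1) i l
       = emult n r (xi n r \<omega>) (xi n r \<pi>) i' l'"
proof -
  have li: "length i = r" and ll: "length l = r" and li': "length i' = r" and ll': "length l' = r"
    using I unfolding Iset_def by auto
  have cnt: "count (mset (zip a b)) (x, y) = wt a b x y" if "length a = length b" for a b x y
  proof -
    have "{q. q < length (zip a b) \<and> (x, y) = zip a b ! q} = {q. q < length a \<and> a ! q = x \<and> b ! q = y}"
      using that by auto
    then show ?thesis
      by (simp add: count_mset count_list_eq_length_filter length_filter_conv_card wt_def)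
  qed
  have "mset (zip i l) = mset (zip i' l')"
    unfolding multiset_eq_iff using cnt li ll li' ll' W by (auto simp: cnt)
  then obtain f where f: "bij_betw f {..<length (zip i l)} {..<length (zip i' l')}"
      and fz: "\<forall>q<length (zip i l). zip i l ! q = zip i' l' ! (f q)"
    using permutation_Ex_bij by blast
  have fb: "bij_betw f {..<r} {..<r}" using f li ll li' ll' by simp
  have fr: "f q < r" if "q < r" for q using fb that unfolding bij_betw_def by auto
  have ieq: "i = map (\<lambda>q. i' ! f q) [0..<r]"
    by (rule nth_equalityI) (use li ll fz fr li' ll' in auto)
  have leq: "l = map (\<lambda>q. l' ! f q) [0..<r]"
    by (rule nth_equalityI) (use li ll fz fr li' ll' in auto)
  define h where "h j' = map (\<lambda>q. j' ! f q) [0..<r]" for j' :: "nat list"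
  have hI: "h ` Iset n r \<subseteq> Iset n r"
  proof
    fix x assume "x \<in> h ` Iset n r"
    then obtain j' where j': "j' \<in> Iset n r" "x = h j'" by blast
    have "set x \<subseteq> {1..n}"
    proof
      fix y assume "y \<in> set x"
      then obtain q where "q < r" "y = j' ! f q" using j' unfolding h_def by auto
      then have "y \<in> set j'" using fr j' unfolding Iset_def by auto
      then show "y \<in> {1..n}" using j' unfolding Iset_def by auto
    qed
    then show "x \<in> Iset n r" using j' unfolding Iset_def h_def by auto
  qed
  have hinj: "inj_on h (Iset n r)"
  proof (rule inj_onI)
    fix a b assume a: "a \<in> Iset n r" and b: "b \<in> Iset n r" and e: "h a = h b"
    have "a ! p = b ! p" if p: "p < r" for p
    proof -
      obtain q where "q < r" "p = f q" using fb p unfolding bij_betw_def by auto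
      then show ?thesis using e unfolding h_def by (metis length_map length_upt minus_nat.diff_0 nth_map nth_upt plus_nat.add_0)
    qed
    then show "a = b" using a b unfolding Iset_def by (auto intro: nth_equalityI)
  qed
  have hb: "bij_betw h (Iset n r) (Iset n r)"
    unfolding bij_betw_def using hinj endo_inj_surj[OF finite_Iset hI hinj] by simp
  have "emult n r (xi n r \<omega>) (xi n r \<pi> :: nat list \<Rightarrow> nat list \<Rightarrow> 'a) i l
      = (\<Sum>j'\<in>Iset n r. xi n r \<omega> i (h j') * xi n r \<pi> (h j') l)"
    unfolding emult_def using sum.reindex_bij_betw[OF hb, of "\<lambda>j. xi n r \<omega> i j * xi n r \<pi> j l"] by metis
  also have "\<dots> = (\<Sum>j'\<in>Iset n r. xi n r \<omega> i' j' * xi n r \<pi> j' l')"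
  proof (rule sum.cong[OF refl])
    fix j' assume j': "j' \<in> Iset n r"
    have lj: "length j' = r" using j' unfolding Iset_def by auto
    have hj: "h j' \<in> Iset n r" using hI j' by auto
    have "wt i (h j') = wt i' j'" unfolding ieq h_def by (rule wt_perm[OF fb li' lj])
    moreover have "wt (h j') l = wt j' l'" unfolding leq h_def by (rule wt_perm[OF fb lj ll'])
    ultimately show "xi n r \<omega> i (h j') * xi n r \<pi> (h j') l = (xi n r \<omega> i' j' * xi n r \<pi> j' l' :: 'a)"
      unfolding xi_def using I j' hj by simp
  qed
  finally show ?thesis unfolding emult_def by simp
qed

theorem proposition4p2:
  fixes n r s t :: nat and \<omega> \<pi> :: "nat \<Rightarrow> nat \<Rightarrow> nat"
  assumes "0 < n" and "0 < r"
    and "\<omega> \<in> Lambda_s s n r" and "\<pi> \<in> Lambda_s t n r"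
  shows "emult n r (xi n r \<omega>) (xi n r \<pi> :: nat list \<Rightarrow> nat list \<Rightarrow> 'a::comm_ring_1)
           \<in> J (s + t) n r"
proof -
  define M where "M = emult n r (xi n r \<omega>) (xi n r \<pi> :: nat list \<Rightarrow> nat list \<Rightarrow> 'a)"
  define P where "P \<theta> p = (fst p \<in> Iset n r \<and> snd p \<in> Iset n r \<and> wt (fst p) (snd p) = \<theta>)"
    for \<theta> and p :: "nat list \<times> nat list"
  define c where "c \<theta> = (if \<exists>p. P \<theta> p then M (fst (SOME p. P \<theta> p)) (snd (SOME p. P \<theta> p)) else 0)"
    for \<theta>
  have "M = (\<lambda>i j. \<Sum>\<theta>\<in>Lambda_s (s + t) n r. c \<theta> * xi n r \<theta> i j)"
  proof (intro ext)
    fix i l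
    show "M i l = (\<Sum>\<theta>\<in>Lambda_s (s + t) n r. c \<theta> * xi n r \<theta> i l)"
    proof (cases "i \<in> Iset n r \<and> l \<in> Iset n r")
      case True
      have rhs: "(\<Sum>\<theta>\<in>Lambda_s (s + t) n r. c \<theta> * xi n r \<theta> i l)
          = (if wt i l \<in> Lambda_s (s + t) n r then c (wt i l) else 0)"
      proof -
        have "c \<theta> * xi n r \<theta> i l = (if wt i l = \<theta> then c \<theta> else 0)" for \<theta>
          using True by (simp add: xi_def)
        then show ?thesis using finite_Lambda_s by (simp add: sum.delta)
      qed
      show ?thesis
      proof (cases "wt i l \<in> Lambda_s (s + t) n r")
        case True2: True
        have ex: "\<exists>p. P (wt i l) p" unfolding P_def using True by (intro exI[of _ "(i, l)"]) simp
        then have sp: "P (wt i l) (SOME p. P (wt i l) p)" by (rule someI_ex)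
        define p0 where "p0 = (SOME p. P (wt i l) p)"
        have p0: "fst p0 \<in> Iset n r" "snd p0 \<in> Iset n r" "wt (fst p0) (snd p0) = wt i l"
          using sp unfolding p0_def P_def by auto
        have "c (wt i l) = M (fst p0) (snd p0)"
          unfolding c_def p0_def using ex by simp
        also have "\<dots> = M i l"
          unfolding M_def by (rule emult_inv) (use p0 True in auto)
        finally have "c (wt i l) = M i l" .
        then show ?thesis using rhs True2 by simp
      next
        case False
        have "M i l = 0" unfolding M_def emult_def
        proof (rule sum.neutral, rule ballI)
          fix j assume j: "j \<in> Iset n r"
          show "xi n r \<omega> i j * xi n r \<pi> j l = (0::'a)"
          proof (rule ccontr)
            assume "xi n r \<omega> i j * xi n r \<pi> j l \<noteq> (0::'a)"
            then have "wt i j = \<omega>" "wt j l = \<pi>" unfolding xi_def by (auto split: if_splits)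
            then have "wt i l \<in> Lambda_s (s + t) n r"
              using comp_deg[of i n r j l s t] True j assms by simp
            then show False using False by simp
          qed
        qed
        then show ?thesis using rhs False by simp
      qed
    next
      case False
      have "M i l = 0" unfolding M_def emult_def
        by (rule sum.neutral) (use False in \<open>auto simp: xi_def\<close>)
      moreover have "(\<Sum>\<theta>\<in>Lambda_s (s + t) n r. c \<theta> * xi n r \<theta> i l) = 0"
        by (rule sum.neutral) (use False in \<open>auto simp: xi_def\<close>)
      ultimately show ?thesis by simp
    qed
  qed
  then show ?thesis unfolding J_def M_def by blast
qed

end
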